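(* With probability $1-o(n^{-2})$: (i) $\mathbf m_0^f=e^{-d}pm+O(\sqrt m\log^4 n)$; (ii) $\mathbf m_0^u=e^{-d}(1-p)m+O(\sqrt m\log^4 n)$; (iii) $\mathbf m_1^f=(1-e^{-d})qm+O(\sqrt m\log^4 n)$; (iv) $\mathbf m_1^u=(1-e^{-d})(1-q)m+O(\sqrt m\log^4 n)$.
   Context: Setting: $n$ individuals, $k\sim n^{\theta}$ for fixed $\theta\in(0,1)$ of them infected, the infected set uniformly random of size $k$; constants $c,d>0$; $m=ck\log(n/k)$ tests and $\Delta=cd\log(n/k)$. Constant-column design: each individual independently is assigned to exactly $\Delta$ distinct tests chosen uniformly at random. A test is truly positive if it contains an infected individual and truly negative otherwise. Displayed results: independently across tests, a truly negative test is flipped (displayed positive) with probability $p$, a truly positive test is flipped (displayed negative) with probability $q$, where $p,q\ge0$, $p+q<1$. For $t\in\{0,1\}$, $\mathbf m_t^f$ is the number of tests with true result $t$ that are flipped and $\mathbf m_t^u$ the number with true result $t$ that are not flipped ($t=0$ negative, $t=1$ positive). $\log$ natural; asymptotics as $n\to\infty$. *)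

theory Defs
  imports "HOL-Probability.Probability" "HOL-Library.Landau_Symbols"
begin

text \<open>Individuals are 0..<n, tests are 0..<m. An outcome is a triple (S, G, F):
 S the infected set, G i the set of tests of individual i, F a the flip indicator of test a.\<close>

definition truepos :: "nat set \<Rightarrow> (nat \<Rightarrow> nat set) \<Rightarrow> nat \<Rightarrow> bool" where
  "truepos S G a \<longleftrightarrow> (\<exists>i\<in>S. a \<in> G i)"

definition infected_pmf :: "nat \<Rightarrow> nat \<Rightarrow> nat set pmf" where
  "infected_pmf n k = pmf_of_set {S. S \<subseteq> {..<n} \<and> card S = k}"

definition design_pmf :: "nat \<Rightarrow> nat \<Rightarrow> nat \<Rightarrow> (nat \<Rightarrow> nat set) pmf" where
  "design_pmf n m \<Delta> = Pi_pmf {..<n} {} (\<lambda>i. pmf_of_set {T. T \<subseteq> {..<m} \<and> card T = \<Delta>})"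

definition flip_pmf :: "nat \<Rightarrow> real \<Rightarrow> real \<Rightarrow> nat set \<Rightarrow> (nat \<Rightarrow> nat set) \<Rightarrow> (nat \<Rightarrow> bool) pmf" where
  "flip_pmf m p q S G = Pi_pmf {..<m} False
     (\<lambda>a. bernoulli_pmf (if truepos S G a then q else p))"

definition gt_model :: "nat \<Rightarrow> nat \<Rightarrow> nat \<Rightarrow> nat \<Rightarrow> real \<Rightarrow> real \<Rightarrow>
    (nat set \<times> (nat \<Rightarrow> nat set) \<times> (nat \<Rightarrow> bool)) pmf" where
  "gt_model n k m \<Delta> p q =
     do { S \<leftarrow> infected_pmf n k;
          G \<leftarrow> design_pmf n m \<Delta>;
          F \<leftarrow> flip_pmf m p q S G;
          return_pmf (S, G, F) }"

text \<open>So m_0^f = mcount m False True, m_0^u = mcount m False False,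
  m_1^f = mcount m True True, m_1^u = mcount m True False.\<close>
definition mcount :: "nat \<Rightarrow> bool \<Rightarrow> bool \<Rightarrow> nat set \<times> (nat \<Rightarrow> nat set) \<times> (nat \<Rightarrow> bool) \<Rightarrow> nat" where
  "mcount m t f \<omega> = (case \<omega> of (S, G, F) \<Rightarrow>
      card {a \<in> {..<m}. truepos S G a = t \<and> F a = f})"

end

theory Submission
  imports Defs "HOL-Real_Asymp.Real_Asymp"
begin


lemma exp_bind_fin:
  fixes f :: "'b \<Rightarrow> real"
  assumes fM: "finite (set_pmf M)" and fN: "\<And>x. x \<in> set_pmf M \<Longrightarrow> finite (set_pmf (N x))"
  shows "measure_pmf.expectation (bind_pmf M N) f =
         measure_pmf.expectation M (\<lambda>x. measure_pmf.expectation (N x) f)"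
proof -
  define S where "S = set_pmf (bind_pmf M N)"
  have fS: "finite S" unfolding S_def set_bind_pmf by (rule finite_UN_I[OF fM fN])
  have "measure_pmf.expectation (bind_pmf M N) f = (\<Sum>z\<in>S. f z * pmf (bind_pmf M N) z)"
    by (rule integral_measure_pmf_real[OF fS]) (auto simp: S_def)
  also have "\<dots> = (\<Sum>z\<in>S. f z * (\<Sum>x\<in>set_pmf M. pmf (N x) z * pmf M x))"
    by (intro sum.cong refl, subst pmf_bind, subst integral_measure_pmf_real[OF fM]) auto
  also have "\<dots> = (\<Sum>x\<in>set_pmf M. (\<Sum>z\<in>S. f z * pmf (N x) z) * pmf M x)"
    unfolding sum_distrib_left sum_distrib_right by (subst sum.swap) (simp add: mult_ac)
  also have "\<dots> = (\<Sum>x\<in>set_pmf M. measure_pmf.expectation (N x) f * pmf M x)"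
    by (intro sum.cong refl, subst integral_measure_pmf_real[OF fS]) (auto simp: S_def)
  also have "\<dots> = measure_pmf.expectation M (\<lambda>x. measure_pmf.expectation (N x) f)"
    by (subst integral_measure_pmf_real[OF fM]) auto
  finally show ?thesis .
qed

lemma Pi_pmf_insert_swap:
  assumes "finite A" "i \<notin> A"
  shows "Pi_pmf (insert i A) dflt M = bind_pmf (Pi_pmf A dflt M) (\<lambda>g. map_pmf (\<lambda>y. g(i:=y)) (M i))"
  using assms by (simp add: Pi_pmf_insert' map_pmf_def bind_commute_pmf[of "M i"])

lemma finite_set_Pi_pmf:
  assumes "finite A" "\<And>i. i \<in> A \<Longrightarrow> finite (set_pmf (M i))"
  shows "finite (set_pmf (Pi_pmf A dflt M))"
  using assms by (auto simp: set_Pi_pmf intro!: finite_PiE_dflt)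

lemma hoeff_pmf:
  fixes v :: "'a \<Rightarrow> real"
  assumes ab: "\<And>y. y \<in> set_pmf N \<Longrightarrow> v y \<in> {a..b}" and l: "l > 0" and fin: "finite (set_pmf N)"
  shows "measure_pmf.expectation N (\<lambda>y. exp (l * (v y - measure_pmf.expectation N v))) \<le> exp (l^2 * (b - a)^2/8)"
proof -
  have rv: "v \<in> borel_measurable (measure_pmf N)" by simp
  have ae: "AE y in measure_pmf N. v y \<in> {a..b}" by (rule AE_pmfI) (rule ab)
  have ibrv: "interval_bounded_random_variable (measure_pmf N) v a b"
    by unfold_locales (fact rv, fact ae)
  have 1: "nn_integral N (\<lambda>y. exp (l * (v y - measure_pmf.expectation N v))) \<le> ennreal (exp (l\<^sup>2 * (b - a)\<^sup>2 / 8))"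
    by (rule interval_bounded_random_variable.Hoeffdings_lemma_nn_integral[OF ibrv l])
  have "nn_integral N (\<lambda>y. exp (l * (v y - measure_pmf.expectation N v))) = ennreal (measure_pmf.expectation N (\<lambda>y. exp (l * (v y - measure_pmf.expectation N v))))"
    by (intro nn_integral_eq_integral integrable_measure_pmf_finite fin) auto
  with 1 show ?thesis by simp
qed

lemma mcd_mgf:
  fixes M :: "'i \<Rightarrow> 'b pmf" and f :: "('i \<Rightarrow> 'b) \<Rightarrow> real" and c :: "'i \<Rightarrow> real"
  assumes "finite A" "\<And>i. i \<in> A \<Longrightarrow> finite (set_pmf (M i))" "l > 0"
  and "\<And>i x y. i \<in> A \<Longrightarrow> x \<in> set_pmf (Pi_pmf A dflt M) \<Longrightarrow> y \<in> set_pmf (Pi_pmf A dflt M)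
           \<Longrightarrow> (\<And>j. j \<noteq> i \<Longrightarrow> x j = y j) \<Longrightarrow> \<bar>f x - f y\<bar> \<le> c i"
  shows "measure_pmf.expectation (Pi_pmf A dflt M)
           (\<lambda>x. exp (l * (f x - measure_pmf.expectation (Pi_pmf A dflt M) f)))
         \<le> exp (l^2 * (\<Sum>i\<in>A. (c i)^2) / 8)"
  using assms(1,2,4)
proof (induction A arbitrary: f rule: finite_induct)
  case empty
  then show ?case by simp
next
  case (insert i A)
  let ?P = "Pi_pmf (insert i A) dflt M" and ?Q = "Pi_pmf A dflt M"
  have fQ: "finite (set_pmf ?Q)" using insert by (intro finite_set_Pi_pmf) auto
  have fMi: "finite (set_pmf (M i))" using insert by auto
  have Peq: "?P = bind_pmf ?Q (\<lambda>g. map_pmf (\<lambda>y. g(i:=y)) (M i))"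
    using insert by (intro Pi_pmf_insert_swap) auto
  have EP: "measure_pmf.expectation ?P \<phi> =
      measure_pmf.expectation ?Q (\<lambda>g. measure_pmf.expectation (M i) (\<lambda>y. \<phi> (g(i:=y))))" for \<phi> :: "_ \<Rightarrow> real"
    by (simp add: Peq exp_bind_fin fQ fMi)
  define h where "h g = measure_pmf.expectation (M i) (\<lambda>y. f (g(i:=y)))" for g
  define \<mu> where "\<mu> = measure_pmf.expectation ?P f"
  have \<mu>h: "\<mu> = measure_pmf.expectation ?Q h" unfolding \<mu>_def EP h_def ..
  have setP: "g(i:=y) \<in> set_pmf ?P" if "g \<in> set_pmf ?Q" "y \<in> set_pmf (M i)" for g y
    using that insert.hyps by (auto simp: set_Pi_pmf PiE_dflt_def)
  have hoeff: "measure_pmf.expectation (M i) (\<lambda>y. exp (l * (f (g(i:=y)) - h g))) \<le> exp (l^2 * (c i)^2/8)"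
    if g: "g \<in> set_pmf ?Q" for g
  proof -
    define v where "v y = f (g(i:=y))" for y
    define a where "a = Min (v ` set_pmf (M i))"
    have "a \<in> v ` set_pmf (M i)" unfolding a_def using fMi set_pmf_not_empty by (intro Min_in) auto
    then obtain y0 where y0: "y0 \<in> set_pmf (M i)" "a = v y0" by auto
    have ab: "v y \<in> {a..a + c i}" if "y \<in> set_pmf (M i)" for y
    proof -
      have "a \<le> v y" unfolding a_def using fMi that by (intro Min_le) auto
      moreover have "\<bar>v y - v y0\<bar> \<le> c i" unfolding v_def
        by (rule insert.prems(2)[OF _ setP[OF g that] setP[OF g y0(1)]]) auto
      ultimately show ?thesis using y0 by auto
    qed
    have "measure_pmf.expectation (M i) (\<lambda>y. exp (l * (v y - measure_pmf.expectation (M i) v))) \<le> exp (l^2 * (a + c i - a)^2/8)"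
      by (rule hoeff_pmf[OF ab \<open>l > 0\<close> fMi])
    then show ?thesis unfolding v_def h_def by simp
  qed
  have IH: "measure_pmf.expectation ?Q (\<lambda>g. exp (l * (h g - measure_pmf.expectation ?Q h)))
              \<le> exp (l^2 * (\<Sum>j\<in>A. (c j)^2) / 8)"
  proof (rule insert.IH)
    show "\<And>j. j \<in> A \<Longrightarrow> finite (set_pmf (M j))" using insert by auto
    fix j x y assume j: "j \<in> A" and x: "x \<in> set_pmf ?Q" and y: "y \<in> set_pmf ?Q" and xy: "\<And>j'. j' \<noteq> j \<Longrightarrow> x j' = y j'"
    have "\<bar>h x - h y\<bar> = \<bar>measure_pmf.expectation (M i) (\<lambda>z. f (x(i:=z)) - f (y(i:=z)))\<bar>"
      unfolding h_def by (subst Bochner_Integration.integral_diff) (auto intro!: integrable_measure_pmf_finite fMi)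
    also have "\<dots> \<le> measure_pmf.expectation (M i) (\<lambda>z. \<bar>f (x(i:=z)) - f (y(i:=z))\<bar>)"
      by (rule integral_abs_bound)
    also have "\<dots> \<le> measure_pmf.expectation (M i) (\<lambda>z. c j)"
    proof (intro integral_mono_AE AE_pmfI integrable_measure_pmf_finite fMi)
      fix z assume z: "z \<in> set_pmf (M i)"
      show "\<bar>f (x(i:=z)) - f (y(i:=z))\<bar> \<le> c j"
        by (rule insert.prems(2)[OF _ setP[OF x z] setP[OF y z]]) (use j xy insert.hyps in auto)
    qed
    also have "\<dots> = c j" by simp
    finally show "\<bar>h x - h y\<bar> \<le> c j" .
  qed
  have "measure_pmf.expectation ?P (\<lambda>x. exp (l * (f x - \<mu>))) =
        measure_pmf.expectation ?Q (\<lambda>g. measure_pmf.expectation (M i) (\<lambda>y. exp (l * (f (g(i:=y)) - \<mu>))))"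
    by (rule EP)
  also have "\<dots> = measure_pmf.expectation ?Q (\<lambda>g. exp (l * (h g - \<mu>)) *
                    measure_pmf.expectation (M i) (\<lambda>y. exp (l * (f (g(i:=y)) - h g))))"
  proof (intro Bochner_Integration.integral_cong refl)
    fix g
    have "measure_pmf.expectation (M i) (\<lambda>y. exp (l * (f (g(i:=y)) - \<mu>))) =
          measure_pmf.expectation (M i) (\<lambda>y. exp (l * (h g - \<mu>)) * exp (l * (f (g(i:=y)) - h g)))"
      by (intro Bochner_Integration.integral_cong refl) (simp add: mult_exp_exp algebra_simps)
    also have "\<dots> = exp (l * (h g - \<mu>)) * measure_pmf.expectation (M i) (\<lambda>y. exp (l * (f (g(i:=y)) - h g)))"
      by simp
    finally show "measure_pmf.expectation (M i) (\<lambda>y. exp (l * (f (g(i:=y)) - \<mu>))) =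
          exp (l * (h g - \<mu>)) * measure_pmf.expectation (M i) (\<lambda>y. exp (l * (f (g(i:=y)) - h g)))" .
  qed
  also have "\<dots> \<le> measure_pmf.expectation ?Q (\<lambda>g. exp (l * (h g - \<mu>)) * exp (l^2 * (c i)^2/8))"
    by (intro integral_mono_AE AE_pmfI integrable_measure_pmf_finite fQ mult_left_mono hoeff) auto
  also have "\<dots> = measure_pmf.expectation ?Q (\<lambda>g. exp (l * (h g - \<mu>))) * exp (l^2 * (c i)^2/8)"
    by simp
  also have "\<dots> \<le> exp (l^2 * (\<Sum>j\<in>A. (c j)^2) / 8) * exp (l^2 * (c i)^2/8)"
    using IH unfolding \<mu>h by (intro mult_right_mono) auto
  also have "\<dots> = exp (l^2 * (\<Sum>j\<in>insert i A. (c j)^2) / 8)"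
    using insert.hyps by (simp add: mult_exp_exp add_divide_distrib distrib_left)
  finally show ?case unfolding \<mu>_def .
qed

lemma mcd_one_side:
  fixes M :: "'i \<Rightarrow> 'b pmf" and f :: "('i \<Rightarrow> 'b) \<Rightarrow> real" and c :: "'i \<Rightarrow> real"
  assumes "finite A" "\<And>i. i \<in> A \<Longrightarrow> finite (set_pmf (M i))"
  and bd: "\<And>i x y. i \<in> A \<Longrightarrow> x \<in> set_pmf (Pi_pmf A dflt M) \<Longrightarrow> y \<in> set_pmf (Pi_pmf A dflt M)
           \<Longrightarrow> (\<And>j. j \<noteq> i \<Longrightarrow> x j = y j) \<Longrightarrow> \<bar>f x - f y\<bar> \<le> c i"
  and t: "t > 0" and V: "V > 0" "(\<Sum>i\<in>A. (c i)^2) \<le> V"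
  shows "measure_pmf.prob (Pi_pmf A dflt M) {x. f x - measure_pmf.expectation (Pi_pmf A dflt M) f \<ge> t}
         \<le> exp (- 2 * t^2 / V)"
proof -
  let ?P = "Pi_pmf A dflt M"
  define \<mu> where "\<mu> = measure_pmf.expectation ?P f"
  define l where "l = 4 * t / V"
  have l: "l > 0" using t V by (simp add: l_def)
  have fin: "finite (set_pmf ?P)" using assms by (intro finite_set_Pi_pmf) auto
  have "measure_pmf.prob ?P {x. f x - \<mu> \<ge> t} \<le> measure_pmf.prob ?P {x \<in> space (measure_pmf ?P). exp (l * (f x - \<mu>)) \<ge> exp (l * t)}"
    using l by (intro measure_pmf.finite_measure_mono) auto
  also have "\<dots> \<le> measure_pmf.expectation ?P (\<lambda>x. exp (l * (f x - \<mu>))) / exp (l * t)"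
    by (intro integral_Markov_inequality_measure[where A = UNIV] integrable_measure_pmf_finite fin) auto
  also have "\<dots> \<le> exp (l^2 * (\<Sum>i\<in>A. (c i)^2) / 8) / exp (l * t)"
    unfolding \<mu>_def by (intro divide_right_mono mcd_mgf assms l bd) auto
  also have "\<dots> \<le> exp (l^2 * V / 8) / exp (l * t)"
    using V by (intro divide_right_mono) (auto intro!: mult_left_mono)
  also have "\<dots> = exp (l^2 * V / 8 - l * t)" by (simp add: exp_diff)
  also have "l^2 * V / 8 - l * t = - 2 * t^2 / V"
    using V by (simp add: l_def field_simps power2_eq_square)
  finally show ?thesis unfolding \<mu>_def .
qed

lemma mcd_tail:
  fixes M :: "'i \<Rightarrow> 'b pmf" and f :: "('i \<Rightarrow> 'b) \<Rightarrow> real" and c :: "'i \<Rightarrow> real"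
  assumes "finite A" "\<And>i. i \<in> A \<Longrightarrow> finite (set_pmf (M i))"
  and bd: "\<And>i x y. i \<in> A \<Longrightarrow> x \<in> set_pmf (Pi_pmf A dflt M) \<Longrightarrow> y \<in> set_pmf (Pi_pmf A dflt M)
           \<Longrightarrow> (\<And>j. j \<noteq> i \<Longrightarrow> x j = y j) \<Longrightarrow> \<bar>f x - f y\<bar> \<le> c i"
  and t: "t > 0" and V: "V > 0" "(\<Sum>i\<in>A. (c i)^2) \<le> V"
  shows "measure_pmf.prob (Pi_pmf A dflt M) {x. \<bar>f x - measure_pmf.expectation (Pi_pmf A dflt M) f\<bar> \<ge> t}
         \<le> 2 * exp (- 2 * t^2 / V)"
proof -
  let ?P = "Pi_pmf A dflt M"
  define \<mu> where "\<mu> = measure_pmf.expectation ?P f"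
  have 1: "measure_pmf.prob ?P {x. f x - \<mu> \<ge> t} \<le> exp (- 2 * t^2 / V)"
    unfolding \<mu>_def by (rule mcd_one_side[OF assms])
  have bd': "\<bar>(- f x) - (- f y)\<bar> \<le> c i" if "i \<in> A" "x \<in> set_pmf ?P" "y \<in> set_pmf ?P" "\<And>j. j \<noteq> i \<Longrightarrow> x j = y j" for i x y
    using bd[OF that] by linarith
  have 2: "measure_pmf.prob ?P {x. (- f x) - measure_pmf.expectation ?P (\<lambda>x. - f x) \<ge> t} \<le> exp (- 2 * t^2 / V)"
    by (rule mcd_one_side[OF assms(1,2) bd' t V]) auto
  have 2: "measure_pmf.prob ?P {x. \<mu> - f x \<ge> t} \<le> exp (- 2 * t^2 / V)"
    using 2 unfolding \<mu>_def by simp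
  have "measure_pmf.prob ?P {x. \<bar>f x - \<mu>\<bar> \<ge> t} \<le> measure_pmf.prob ?P ({x. f x - \<mu> \<ge> t} \<union> {x. \<mu> - f x \<ge> t})"
    by (intro measure_pmf.finite_measure_mono) auto
  also have "\<dots> \<le> measure_pmf.prob ?P {x. f x - \<mu> \<ge> t} + measure_pmf.prob ?P {x. \<mu> - f x \<ge> t}"
    by (rule measure_Un_le) auto
  also have "\<dots> \<le> 2 * exp (- 2 * t^2 / V)" using 1 2 by simp
  finally show ?thesis unfolding \<mu>_def .
qed



lemma prob_bind_fin:
  assumes fM: "finite (set_pmf M)" and fN: "\<And>x. x \<in> set_pmf M \<Longrightarrow> finite (set_pmf (N x))"
  shows "measure_pmf.prob (bind_pmf M N) E = measure_pmf.expectation M (\<lambda>x. measure_pmf.prob (N x) E)"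
proof -
  have "measure_pmf.prob (bind_pmf M N) E = measure_pmf.expectation (bind_pmf M N) (indicator E)"
    by simp
  also have "\<dots> = measure_pmf.expectation M (\<lambda>x. measure_pmf.expectation (N x) (indicator E))"
    by (rule exp_bind_fin[OF fM fN])
  also have "\<dots> = measure_pmf.expectation M (\<lambda>x. measure_pmf.prob (N x) E)"
    by simp
  finally show ?thesis .
qed

lemma prob_bind_le:
  assumes fM: "finite (set_pmf M)" and fN: "\<And>x. x \<in> set_pmf M \<Longrightarrow> finite (set_pmf (N x))"
    and b: "\<And>x. x \<in> set_pmf M \<Longrightarrow> measure_pmf.prob (N x) E \<le> b"
  shows "measure_pmf.prob (bind_pmf M N) E \<le> b"
proof -
  have "measure_pmf.prob (bind_pmf M N) E = measure_pmf.expectation M (\<lambda>x. measure_pmf.prob (N x) E)"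
    by (rule prob_bind_fin[OF fM fN])
  also have "\<dots> \<le> measure_pmf.expectation M (\<lambda>x. b)"
    by (intro integral_mono_AE AE_pmfI integrable_measure_pmf_finite fM b) auto
  also have "\<dots> = b" by simp
  finally show ?thesis .
qed

lemma prob_bind_dep:
  assumes fM: "finite (set_pmf M)" and fN: "\<And>x. x \<in> set_pmf M \<Longrightarrow> finite (set_pmf (N x))"
    and dep: "\<And>x y. x \<in> set_pmf M \<Longrightarrow> y \<in> set_pmf (N x) \<Longrightarrow> (y \<in> E \<longleftrightarrow> x \<in> E')"
  shows "measure_pmf.prob (bind_pmf M N) E = measure_pmf.prob M E'"
proof -
  have "measure_pmf.prob (bind_pmf M N) E = measure_pmf.expectation M (\<lambda>x. measure_pmf.prob (N x) E)"
    by (rule prob_bind_fin[OF fM fN])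
  also have "\<dots> = measure_pmf.expectation M (indicator E')"
  proof (intro integral_cong_AE AE_pmfI)
    fix x assume x: "x \<in> set_pmf M"
    have "measure_pmf.prob (N x) E = measure_pmf.prob (N x) (E \<inter> set_pmf (N x))"
      by (simp add: measure_Int_set_pmf)
    also have "E \<inter> set_pmf (N x) = (if x \<in> E' then set_pmf (N x) else {})"
      using dep[OF x] by auto
    also have "measure_pmf.prob (N x) \<dots> = indicator E' x"
      by (simp add: measure_pmf.prob_eq_1 AE_pmfI)
    finally show "measure_pmf.prob (N x) E = indicator E' x" .
  qed auto
  also have "\<dots> = measure_pmf.prob M E'" by simp
  finally show ?thesis .
qed

definition Wset :: "nat \<Rightarrow> nat \<Rightarrow> nat set set" where
  "Wset Mm D = {T. T \<subseteq> {..<Mm} \<and> card T = D}"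

lemma Wset_fin: "finite (Wset Mm D)"
  unfolding Wset_def by (rule finite_subset[of _ "Pow {..<Mm}"]) auto

lemma Wset_ne: "D \<le> Mm \<Longrightarrow> Wset Mm D \<noteq> {}"
  unfolding Wset_def by (rule ccontr) (auto dest!: spec[of _ "{..<D}"])

lemma design_eq: "design_pmf n Mm D = Pi_pmf {..<n} {} (\<lambda>i. pmf_of_set (Wset Mm D))"
  by (simp add: design_pmf_def Wset_def)

lemma set_design: "D \<le> Mm \<Longrightarrow> set_pmf (design_pmf n Mm D) = PiE_dflt {..<n} {} (\<lambda>i. Wset Mm D)"
  unfolding design_eq by (subst set_Pi_pmf) (auto simp: o_def Wset_fin Wset_ne)

lemma fin_design: "D \<le> Mm \<Longrightarrow> finite (set_pmf (design_pmf n Mm D))"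
  unfolding design_eq by (intro finite_set_Pi_pmf) (auto simp: Wset_fin Wset_ne)

lemma prob_avoid:
  assumes "0 < Mm" "D \<le> Mm" "a < Mm"
  shows "measure_pmf.prob (pmf_of_set (Wset Mm D)) {T. a \<notin> T} = real (Mm - D) / real Mm"
proof -
  have "measure_pmf.prob (pmf_of_set (Wset Mm D)) {T. a \<notin> T} = card (Wset Mm D \<inter> {T. a \<notin> T}) / card (Wset Mm D)"
    by (rule measure_pmf_of_set[OF Wset_ne[OF assms(2)] Wset_fin])
  also have "Wset Mm D \<inter> {T. a \<notin> T} = {T. T \<subseteq> {..<Mm} - {a} \<and> card T = D}"
    unfolding Wset_def by auto
  also have "card \<dots> = (Mm - 1) choose D"
    using assms by (subst n_subsets) auto
  also have "card (Wset Mm D) = Mm choose D"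
    unfolding Wset_def by (subst n_subsets) auto
  also have "real ((Mm - 1) choose D) / real (Mm choose D) = real (Mm - D) / real Mm"
  proof -
    have "(Mm - D) * (Mm choose D) = Mm * ((Mm - 1) choose D)" by (rule binomial_absorb_comp)
    hence "real (Mm - D) * real (Mm choose D) = real Mm * real ((Mm - 1) choose D)"
      by (metis of_nat_mult)
    moreover have "real (Mm choose D) > 0" using assms by simp
    ultimately show ?thesis using assms by (simp add: field_simps)
  qed
  finally show ?thesis .
qed

definition negc :: "nat \<Rightarrow> nat set \<Rightarrow> (nat \<Rightarrow> nat set) \<Rightarrow> nat" where
  "negc Mm S G = card {a \<in> {..<Mm}. \<not> truepos S G a}"

lemma card_filter_real: "finite A \<Longrightarrow> real (card {a \<in> A. P a}) = (\<Sum>a\<in>A. indicator {a. P a} a)"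
proof -
  assume A: "finite A"
  have "real (card {a \<in> A. P a}) = (\<Sum>a\<in>{a \<in> A. P a}. 1)" by simp
  also have "\<dots> = (\<Sum>a\<in>A. if P a then 1 else 0)" by (rule sum.inter_filter[OF A])
  also have "\<dots> = (\<Sum>a\<in>A. indicator {a. P a} a)" by (intro sum.cong) (auto simp: indicator_def)
  finally show ?thesis .
qed

lemma E_negc:
  assumes S: "S \<subseteq> {..<n}" "card S = K" and "0 < Mm" "D \<le> Mm"
  shows "measure_pmf.expectation (design_pmf n Mm D) (\<lambda>G. real (negc Mm S G))
         = real Mm * (real (Mm - D) / real Mm) ^ K"
proof -
  let ?P = "design_pmf n Mm D"
  have fin: "finite (set_pmf ?P)" using assms by (intro fin_design)
  have eq: "real (negc Mm S G) = (\<Sum>a<Mm. indicator {G. \<forall>i\<in>S. a \<notin> G i} G)" for G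
    unfolding negc_def truepos_def by (subst card_filter_real) (auto simp: indicator_def)
  have pr: "measure_pmf.prob ?P {G. \<forall>i\<in>S. a \<notin> G i} = (real (Mm - D) / real Mm) ^ K" if a: "a < Mm" for a
  proof -
    define B where "B i = (if i \<in> S then {T. a \<notin> T} else UNIV)" for i :: nat
    have "{G. \<forall>i\<in>S. a \<notin> G i} = Pi {..<n} B" using S by (auto simp: B_def Pi_def)
    hence "measure_pmf.prob ?P {G. \<forall>i\<in>S. a \<notin> G i} = (\<Prod>i<n. measure_pmf.prob (pmf_of_set (Wset Mm D)) (B i))"
      unfolding design_eq by (simp add: measure_Pi_pmf_Pi)
    also have "\<dots> = (\<Prod>i<n. if i \<in> S then real (Mm - D) / real Mm else 1)"
      using assms a by (intro prod.cong refl) (auto simp: B_def prob_avoid)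
    also have "\<dots> = (\<Prod>i\<in>{i\<in>{..<n}. i \<in> S}. real (Mm - D) / real Mm)"
      by (subst prod.inter_filter) auto
    also have "{i\<in>{..<n}. i \<in> S} = S" using S by auto
    also have "(\<Prod>i\<in>S. real (Mm - D) / real Mm) = (real (Mm - D) / real Mm) ^ K"
      using S by simp
    finally show ?thesis .
  qed
  have "measure_pmf.expectation ?P (\<lambda>G. real (negc Mm S G)) =
        measure_pmf.expectation ?P (\<lambda>G. \<Sum>a<Mm. indicator {G. \<forall>i\<in>S. a \<notin> G i} G)"
    by (simp only: eq)
  also have "\<dots> = (\<Sum>a<Mm. measure_pmf.expectation ?P (indicator {G. \<forall>i\<in>S. a \<notin> G i}))"
    by (intro Bochner_Integration.integral_sum integrable_measure_pmf_finite fin)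
  also have "\<dots> = (\<Sum>a<Mm. (real (Mm - D) / real Mm) ^ K)"
    by (intro sum.cong refl) (simp add: pr)
  also have "\<dots> = real Mm * (real (Mm - D) / real Mm) ^ K" by simp
  finally show ?thesis .
qed

lemma negc_bd:
  assumes S: "S \<subseteq> {..<n}" and D: "D \<le> Mm"
    and G: "G \<in> set_pmf (design_pmf n Mm D)" and G': "G' \<in> set_pmf (design_pmf n Mm D)"
    and eq: "\<And>j. j \<noteq> i \<Longrightarrow> G j = G' j"
  shows "\<bar>real (negc Mm S G) - real (negc Mm S G')\<bar> \<le> (if i \<in> S then real D else 0)"
proof -
  have one: "real (negc Mm S H') \<le> real (negc Mm S H) + (if i \<in> S then real D else 0)"
    if H: "H \<in> set_pmf (design_pmf n Mm D)" and H': "H' \<in> set_pmf (design_pmf n Mm D)"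
      and eqH: "\<And>j. j \<noteq> i \<Longrightarrow> H j = H' j" for H H'
  proof (cases "i \<in> S")
    case False
    hence "truepos S H a = truepos S H' a" for a
      unfolding truepos_def using eqH by (metis)
    thus ?thesis using False unfolding negc_def by simp
  next
    case True
    let ?X = "{a \<in> {..<Mm}. \<not> truepos S H a}" and ?X' = "{a \<in> {..<Mm}. \<not> truepos S H' a}"
    have sub: "?X' \<subseteq> ?X \<union> H i"
      unfolding truepos_def by (auto) (metis eqH)
    have Hi: "H i \<in> Wset Mm D" using H True S D by (auto simp: set_design PiE_dflt_def)
    hence finHi: "finite (H i)" "card (H i) = D"
      unfolding Wset_def by (auto intro: finite_subset)
    have "card ?X' \<le> card (?X \<union> H i)" by (intro card_mono sub) (auto simp: finHi)
    also have "\<dots> \<le> card ?X + card (H i)" by (rule card_Un_le)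
    finally have "card ?X' \<le> card ?X + D" using finHi by simp
    thus ?thesis using True unfolding negc_def by simp
  qed
  show ?thesis using one[OF G G' eq] one[OF G' G] eq by (smt (verit))
qed



lemma fin_bern: "finite (set_pmf (bernoulli_pmf r))"
  by (rule finite_subset[of _ UNIV]) auto

lemma flip_eq: "flip_pmf Mm p q S G = Pi_pmf {..<Mm} False (\<lambda>a. bernoulli_pmf (if truepos S G a then q else p))"
  by (simp add: flip_pmf_def)

lemma fin_flip: "finite (set_pmf (flip_pmf Mm p q S G))"
  unfolding flip_eq by (intro finite_set_Pi_pmf fin_bern) auto

definition posc :: "nat \<Rightarrow> bool \<Rightarrow> nat set \<Rightarrow> (nat \<Rightarrow> nat set) \<Rightarrow> nat" where
  "posc Mm t S G = card {a \<in> {..<Mm}. truepos S G a = t}"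

definition fcnt :: "nat \<Rightarrow> bool \<Rightarrow> nat set \<Rightarrow> (nat \<Rightarrow> nat set) \<Rightarrow> (nat \<Rightarrow> bool) \<Rightarrow> nat" where
  "fcnt Mm t S G F = card {a \<in> {..<Mm}. truepos S G a = t \<and> F a}"

lemma prob_flip_single:
  assumes "0 \<le> p" "p \<le> 1" "0 \<le> q" "q \<le> 1" "a < Mm"
  shows "measure_pmf.prob (flip_pmf Mm p q S G) {F. F a} = (if truepos S G a then q else p)"
proof -
  have "measure_pmf.prob (flip_pmf Mm p q S G) {F. F a} =
        measure_pmf.prob (map_pmf (\<lambda>F. F a) (flip_pmf Mm p q S G)) {True}"
    by (simp add: vimage_def)
  also have "map_pmf (\<lambda>F. F a) (flip_pmf Mm p q S G) = bernoulli_pmf (if truepos S G a then q else p)"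
    unfolding flip_eq using assms by (subst Pi_pmf_component) auto
  also have "measure_pmf.prob \<dots> {True} = (if truepos S G a then q else p)"
    using assms by (simp add: measure_pmf_single)
  finally show ?thesis .
qed

lemma E_fcnt:
  assumes "0 \<le> p" "p \<le> 1" "0 \<le> q" "q \<le> 1"
  shows "measure_pmf.expectation (flip_pmf Mm p q S G) (\<lambda>F. real (fcnt Mm t S G F))
         = (if t then q else p) * real (posc Mm t S G)"
proof -
  let ?P = "flip_pmf Mm p q S G"
  have eq: "real (fcnt Mm t S G F) = (\<Sum>a<Mm. indicator {F. truepos S G a = t \<and> F a} F)" for F
    unfolding fcnt_def by (subst card_filter_real) (auto simp: indicator_def)
  have "measure_pmf.expectation ?P (\<lambda>F. real (fcnt Mm t S G F)) =
        measure_pmf.expectation ?P (\<lambda>F. \<Sum>a<Mm. indicator {F. truepos S G a = t \<and> F a} F)"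
    by (simp only: eq)
  also have "\<dots> = (\<Sum>a<Mm. measure_pmf.expectation ?P (indicator {F. truepos S G a = t \<and> F a}))"
    by (intro Bochner_Integration.integral_sum integrable_measure_pmf_finite fin_flip)
  also have "\<dots> = (\<Sum>a<Mm. indicator {a. truepos S G a = t} a * (if t then q else p))"
  proof (intro sum.cong refl)
    fix a assume a: "a \<in> {..<Mm}"
    show "measure_pmf.expectation ?P (indicator {F. truepos S G a = t \<and> F a}) =
          indicator {a. truepos S G a = t} a * (if t then q else p)"
      using prob_flip_single[OF assms, of a Mm S G] a by (cases "truepos S G a = t") auto
  qed
  also have "\<dots> = (if t then q else p) * real (posc Mm t S G)"
    unfolding posc_def by (subst card_filter_real) (auto simp: sum_distrib_left mult_ac)
  finally show ?thesis .
qed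

lemma fcnt_bd:
  assumes "\<And>j. j \<noteq> i \<Longrightarrow> F j = F' j"
  shows "\<bar>real (fcnt Mm t S G F) - real (fcnt Mm t S G F')\<bar> \<le> 1"
proof -
  have one: "real (fcnt Mm t S G H') \<le> real (fcnt Mm t S G H) + 1" if eqH: "\<And>j. j \<noteq> i \<Longrightarrow> H j = H' j" for H H'
  proof -
    let ?X = "{a \<in> {..<Mm}. truepos S G a = t \<and> H a}" and ?X' = "{a \<in> {..<Mm}. truepos S G a = t \<and> H' a}"
    have "?X' \<subseteq> insert i ?X" using eqH by auto
    hence "card ?X' \<le> card (insert i ?X)" by (intro card_mono) auto
    also have "\<dots> \<le> Suc (card ?X)" by (simp add: card_insert_if)
    finally show ?thesis unfolding fcnt_def by simp
  qed
  have a: "real (fcnt Mm t S G F') \<le> real (fcnt Mm t S G F) + 1" by (rule one) (rule assms)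
  have b: "real (fcnt Mm t S G F) \<le> real (fcnt Mm t S G F') + 1" by (rule one) (simp add: assms)
  show ?thesis using a b by linarith
qed

lemma flip_tail:
  assumes "0 \<le> p" "p \<le> 1" "0 \<le> q" "q \<le> 1" "0 < Mm" "tt > 0"
  shows "measure_pmf.prob (flip_pmf Mm p q S G)
           {F. \<bar>real (fcnt Mm t S G F) - (if t then q else p) * real (posc Mm t S G)\<bar> \<ge> tt}
         \<le> 2 * exp (- 2 * tt^2 / real Mm)"
proof -
  have "measure_pmf.prob (Pi_pmf {..<Mm} False (\<lambda>a. bernoulli_pmf (if truepos S G a then q else p)))
           {F. \<bar>real (fcnt Mm t S G F) - measure_pmf.expectation (Pi_pmf {..<Mm} False (\<lambda>a. bernoulli_pmf (if truepos S G a then q else p))) (\<lambda>F. real (fcnt Mm t S G F))\<bar> \<ge> tt}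
         \<le> 2 * exp (- 2 * tt^2 / real Mm)"
    by (rule mcd_tail[where c = "\<lambda>_. 1"]) (use assms in \<open>auto intro: fin_bern fcnt_bd\<close>)
  thus ?thesis using E_fcnt[OF assms(1-4), of Mm S G t] unfolding flip_eq by simp
qed

definition EM0 :: "nat \<Rightarrow> nat \<Rightarrow> nat \<Rightarrow> real" where
  "EM0 Mm D K = real Mm * (real (Mm - D) / real Mm) ^ K"

lemma design_tail:
  assumes S: "S \<subseteq> {..<n}" "card S = K" and "0 < K" "0 < D" "D \<le> Mm" "tt > 0"
  shows "measure_pmf.prob (design_pmf n Mm D)
           {G. \<bar>real (negc Mm S G) - EM0 Mm D K\<bar> \<ge> tt}
         \<le> 2 * exp (- 2 * tt^2 / (real K * real D ^ 2))"
proof -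
  have finS: "finite S" using S finite_subset by blast
  have sumc: "(\<Sum>i\<in>{..<n}. (if i \<in> S then real D else 0)^2) = real K * real D ^ 2"
  proof -
    have "(\<Sum>i\<in>{..<n}. (if i \<in> S then real D else 0)^2) = (\<Sum>i\<in>{..<n}. if i \<in> S then real D ^ 2 else 0)"
      by (intro sum.cong) auto
    also have "\<dots> = (\<Sum>i\<in>{i\<in>{..<n}. i \<in> S}. real D ^ 2)" by (subst sum.inter_filter) auto
    also have "{i\<in>{..<n}. i \<in> S} = S" using S by auto
    finally show ?thesis using S by simp
  qed
  have "measure_pmf.prob (Pi_pmf {..<n} {} (\<lambda>i. pmf_of_set (Wset Mm D)))
           {G. \<bar>real (negc Mm S G) - measure_pmf.expectation (Pi_pmf {..<n} {} (\<lambda>i. pmf_of_set (Wset Mm D))) (\<lambda>G. real (negc Mm S G))\<bar> \<ge> tt}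
         \<le> 2 * exp (- 2 * tt^2 / (real K * real D ^ 2))"
  proof (rule mcd_tail[where c = "\<lambda>i. if i \<in> S then real D else 0"])
    show "finite {..<n}" by simp
    show "\<And>i. i \<in> {..<n} \<Longrightarrow> finite (set_pmf (pmf_of_set (Wset Mm D)))"
      using assms by (simp add: Wset_fin Wset_ne)
    show "\<And>i x y. i \<in> {..<n} \<Longrightarrow> x \<in> set_pmf (Pi_pmf {..<n} {} (\<lambda>i. pmf_of_set (Wset Mm D))) \<Longrightarrow>
           y \<in> set_pmf (Pi_pmf {..<n} {} (\<lambda>i. pmf_of_set (Wset Mm D))) \<Longrightarrow>
           (\<And>j. j \<noteq> i \<Longrightarrow> x j = y j) \<Longrightarrow> \<bar>real (negc Mm S x) - real (negc Mm S y)\<bar> \<le> (if i \<in> S then real D else 0)"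
      using negc_bd[OF S(1) assms(5)] unfolding design_eq by blast
    show "tt > 0" by fact
    show "0 < real K * real D ^ 2" using assms by simp
    show "(\<Sum>i\<in>{..<n}. (if i \<in> S then real D else 0)^2) \<le> real K * real D ^ 2" using sumc by simp
  qed
  thus ?thesis using E_negc[OF S, of Mm D] assms unfolding design_eq EM0_def by simp
qed



definition Iset :: "nat \<Rightarrow> nat \<Rightarrow> nat set set" where
  "Iset n K = {S. S \<subseteq> {..<n} \<and> card S = K}"

lemma Iset_fin: "finite (Iset n K)"
  unfolding Iset_def by (rule finite_subset[of _ "Pow {..<n}"]) auto

lemma Iset_ne: "K \<le> n \<Longrightarrow> Iset n K \<noteq> {}"
  unfolding Iset_def by (rule ccontr) (auto dest!: spec[of _ "{..<K}"])

lemma gt_eq: "gt_model n K Mm D p q =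
  bind_pmf (pmf_of_set (Iset n K)) (\<lambda>S. bind_pmf (design_pmf n Mm D) (\<lambda>G.
     bind_pmf (flip_pmf Mm p q S G) (\<lambda>F. return_pmf (S, G, F))))"
  by (simp add: gt_model_def infected_pmf_def Iset_def)

lemma fin_inner: "finite (set_pmf (bind_pmf (flip_pmf Mm p q S G) (\<lambda>F. return_pmf (S, G, F))))"
  unfolding set_bind_pmf set_return_pmf by (intro finite_UN_I fin_flip) simp

lemma fin_bind: "finite (set_pmf M) \<Longrightarrow> (\<And>x. finite (set_pmf (N x))) \<Longrightarrow> finite (set_pmf (bind_pmf M N))"
  unfolding set_bind_pmf by blast

lemma fin_mid: "D \<le> Mm \<Longrightarrow> finite (set_pmf (bind_pmf (design_pmf n Mm D) (\<lambda>G.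
     bind_pmf (flip_pmf Mm p q S G) (\<lambda>F. return_pmf (S, G, F)))))"
  by (rule fin_bind[OF fin_design fin_inner])

lemma probA:
  assumes "K \<le> n" "0 < K" "0 < D" "D \<le> Mm" "tt > 0"
  shows "measure_pmf.prob (gt_model n K Mm D p q)
    {(S,G,F). \<bar>real (negc Mm S G) - EM0 Mm D K\<bar> \<ge> tt} \<le> 2 * exp (- 2 * tt^2 / (real K * real D ^ 2))"
  unfolding gt_eq
proof (rule prob_bind_le)
  show "finite (set_pmf (pmf_of_set (Iset n K)))" using assms by (simp add: Iset_fin Iset_ne)
  fix S assume S: "S \<in> set_pmf (pmf_of_set (Iset n K))"
  have "S \<in> Iset n K" using S assms by (simp add: Iset_fin Iset_ne)
  hence S': "S \<subseteq> {..<n}" "card S = K" by (auto simp: Iset_def)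
  show "finite (set_pmf (bind_pmf (design_pmf n Mm D) (\<lambda>G.
     bind_pmf (flip_pmf Mm p q S G) (\<lambda>F. return_pmf (S, G, F)))))"
    using assms by (intro fin_mid)
  have "measure_pmf.prob (bind_pmf (design_pmf n Mm D) (\<lambda>G.
     bind_pmf (flip_pmf Mm p q S G) (\<lambda>F. return_pmf (S, G, F))))
     {(S,G,F). \<bar>real (negc Mm S G) - EM0 Mm D K\<bar> \<ge> tt} =
     measure_pmf.prob (design_pmf n Mm D) {G. \<bar>real (negc Mm S G) - EM0 Mm D K\<bar> \<ge> tt}"
    apply (rule prob_bind_dep)
      apply (rule fin_design)
      apply (simp add: assms)
     apply (rule fin_inner)
    apply auto
    done
  also have "\<dots> \<le> 2 * exp (- 2 * tt^2 / (real K * real D ^ 2))"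
    by (rule design_tail[OF S']) (use assms in auto)
  finally show "measure_pmf.prob (bind_pmf (design_pmf n Mm D) (\<lambda>G.
     bind_pmf (flip_pmf Mm p q S G) (\<lambda>F. return_pmf (S, G, F))))
     {(S,G,F). \<bar>real (negc Mm S G) - EM0 Mm D K\<bar> \<ge> tt} \<le> 2 * exp (- 2 * tt^2 / (real K * real D ^ 2))" .
qed

lemma probB:
  assumes "K \<le> n" "0 < D" "D \<le> Mm" "tt > 0" "0 \<le> p" "p \<le> 1" "0 \<le> q" "q \<le> 1"
  shows "measure_pmf.prob (gt_model n K Mm D p q)
    {(S,G,F). \<bar>real (fcnt Mm t S G F) - (if t then q else p) * real (posc Mm t S G)\<bar> \<ge> tt}
      \<le> 2 * exp (- 2 * tt^2 / real Mm)"
  unfolding gt_eq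
proof (rule prob_bind_le)
  show "finite (set_pmf (pmf_of_set (Iset n K)))" using assms by (simp add: Iset_fin Iset_ne)
  fix S assume S: "S \<in> set_pmf (pmf_of_set (Iset n K))"
  show "finite (set_pmf (bind_pmf (design_pmf n Mm D) (\<lambda>G.
     bind_pmf (flip_pmf Mm p q S G) (\<lambda>F. return_pmf (S, G, F)))))"
    using assms by (intro fin_mid)
  show "measure_pmf.prob (bind_pmf (design_pmf n Mm D) (\<lambda>G.
     bind_pmf (flip_pmf Mm p q S G) (\<lambda>F. return_pmf (S, G, F))))
     {(S,G,F). \<bar>real (fcnt Mm t S G F) - (if t then q else p) * real (posc Mm t S G)\<bar> \<ge> tt}
      \<le> 2 * exp (- 2 * tt^2 / real Mm)"
  proof (rule prob_bind_le)
    show "finite (set_pmf (design_pmf n Mm D))" using assms by (intro fin_design)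
    fix G assume G: "G \<in> set_pmf (design_pmf n Mm D)"
    show "finite (set_pmf (bind_pmf (flip_pmf Mm p q S G) (\<lambda>F. return_pmf (S, G, F))))"
      by (rule fin_inner)
    have "measure_pmf.prob (bind_pmf (flip_pmf Mm p q S G) (\<lambda>F. return_pmf (S, G, F)))
       {(S,G,F). \<bar>real (fcnt Mm t S G F) - (if t then q else p) * real (posc Mm t S G)\<bar> \<ge> tt}
      = measure_pmf.prob (flip_pmf Mm p q S G)
       {F. \<bar>real (fcnt Mm t S G F) - (if t then q else p) * real (posc Mm t S G)\<bar> \<ge> tt}"
      by (rule prob_bind_dep) (auto intro: fin_flip)
    also have "\<dots> \<le> 2 * exp (- 2 * tt^2 / real Mm)"
      by (rule flip_tail) (use assms in auto)
    finally show "measure_pmf.prob (bind_pmf (flip_pmf Mm p q S G) (\<lambda>F. return_pmf (S, G, F)))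
       {(S,G,F). \<bar>real (fcnt Mm t S G F) - (if t then q else p) * real (posc Mm t S G)\<bar> \<ge> tt}
      \<le> 2 * exp (- 2 * tt^2 / real Mm)" .
  qed
qed



lemma det_combine:
  fixes x y f0 f1 u0 u1 E e Mm p q t :: real
  assumes p: "0 \<le> p" "p \<le> 1" and q: "0 \<le> q" "q \<le> 1"
    and h1: "\<bar>x - E\<bar> < t" and h2: "\<bar>E - e * Mm\<bar> \<le> t"
    and h3: "\<bar>f0 - p * x\<bar> < t" and h4: "\<bar>f1 - q * y\<bar> < t"
    and s: "x + y = Mm" "u0 = x - f0" "u1 = y - f1"
  shows "\<bar>f0 - e * p * Mm\<bar> \<le> 3 * t \<and> \<bar>u0 - e * (1 - p) * Mm\<bar> \<le> 3 * t \<and>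
         \<bar>f1 - (1 - e) * q * Mm\<bar> \<le> 3 * t \<and> \<bar>u1 - (1 - e) * (1 - q) * Mm\<bar> \<le> 3 * t"
proof -
  define d where "d = x - e * Mm"
  have d: "\<bar>d\<bar> \<le> 2 * t" using h1 h2 unfolding d_def by linarith
  have b1: "\<bar>p * d\<bar> \<le> 2 * t" using d p by (simp add: abs_mult) (smt (verit) mult_left_le_one_le abs_ge_zero)
  have b2: "\<bar>(1 - p) * d\<bar> \<le> 2 * t" using d p by (simp add: abs_mult) (smt (verit) mult_left_le_one_le abs_ge_zero)
  have b3: "\<bar>q * d\<bar> \<le> 2 * t" using d q by (simp add: abs_mult) (smt (verit) mult_left_le_one_le abs_ge_zero)
  have b4: "\<bar>(1 - q) * d\<bar> \<le> 2 * t" using d q by (simp add: abs_mult) (smt (verit) mult_left_le_one_le abs_ge_zero)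
  have e1: "f0 - e * p * Mm = (f0 - p * x) + p * d" unfolding d_def by (simp add: algebra_simps)
  have e2: "u0 - e * (1 - p) * Mm = (1 - p) * d - (f0 - p * x)" unfolding d_def using s by (simp add: algebra_simps)
  have y: "y = Mm - x" using s(1) by simp
  have e3: "f1 - (1 - e) * q * Mm = (f1 - q * y) - q * d" unfolding d_def y by (simp add: algebra_simps)
  have e4: "u1 - (1 - e) * (1 - q) * Mm = - ((1 - q) * d) - (f1 - q * y)" unfolding d_def s(3) y by (simp add: algebra_simps)
  show ?thesis unfolding e1 e2 e3 e4 using b1 b2 b3 b4 h3 h4 by linarith
qed

lemma n_bounds:
  fixes K Mm D :: nat and cn dn c d L l :: real
  assumes c: "0 < c" "c / 2 < cn" "cn < 2 * c" and d: "0 < d" "d / 2 < dn" "dn < 2 * d"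
    and Mm: "real Mm = cn * real K * l" and D: "real D = cn * dn * l"
    and l: "0 < l" "l \<le> L" and K: "real K \<ge> 4 * d" and L: "L \<ge> 2" "L ^ 3 \<ge> 16 * c * d ^ 2"
  shows "0 < D" "D \<le> Mm" "0 < Mm"
    "\<bar>real Mm * (real (Mm - D) / real Mm) ^ K - exp (- dn) * real Mm\<bar> \<le> sqrt (real Mm) * L ^ 4"
    "exp (- 2 * (sqrt (real Mm) * L ^ 4) ^ 2 / (real K * real D ^ 2)) \<le> exp (- 4 * L)"
    "exp (- 2 * (sqrt (real Mm) * L ^ 4) ^ 2 / real Mm) \<le> exp (- 4 * L)"
proof -
  have cn0: "cn > 0" and dn0: "dn > 0" using c d by linarith+
  have K0: "real K > 0" using K d by linarith
  have Mmr: "real Mm > 0" unfolding Mm using cn0 K0 l by simp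
  thus Mm0: "0 < Mm" by simp
  have Dr: "real D > 0" unfolding D using cn0 dn0 l by simp
  thus "0 < D" by simp
  define x where "x = real D / real Mm"
  have x: "x = dn / real K" unfolding x_def Mm D using cn0 l K0 by (simp add: field_simps)
  have x0: "0 < x" unfolding x using dn0 K0 by simp
  have xh: "x \<le> 1 / 2" unfolding x using K0 K d by (simp add: field_simps)
  have Dx: "real D = x * real Mm" unfolding x_def using Mmr by simp
  have "x * real Mm \<le> 1 * real Mm" by (rule mult_right_mono) (use xh Mmr in auto)
  hence "real D \<le> real Mm" using Dx by simp
  thus DM: "D \<le> Mm" by simp
  have Kx: "real K * x = dn" unfolding x using K0 by simp
  have KD2: "real K * real D ^ 2 = real Mm * (dn * real D)"
    by (simp add: Dx power2_eq_square Kx[symmetric] algebra_simps)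
  have dnD: "dn * real D \<le> 8 * c * d ^ 2 * L"
  proof -
    have "dn * real D = cn * dn ^ 2 * l" unfolding D by (simp add: power2_eq_square)
    also have "\<dots> \<le> (2 * c) * (2 * d) ^ 2 * L"
      using cn0 dn0 l c d by (intro mult_mono power_mono) auto
    finally show ?thesis by (simp add: power2_eq_square)
  qed
  have L1: "L ^ 4 \<ge> 2 * (8 * c * d ^ 2 * L)"
  proof -
    have "L * (16 * c * d ^ 2) \<le> L * L ^ 3" using L by (intro mult_left_mono) auto
    moreover have "L * L ^ 3 = L ^ 4" by (simp add: eval_nat_numeral)
    ultimately show ?thesis by (simp add: mult_ac)
  qed
  have sq: "(sqrt (real Mm) * L ^ 4) ^ 2 = real Mm * L ^ 8"
    using Mmr by (simp add: power_mult_distrib power_mult[symmetric])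
  have L85: "L ^ 5 \<le> L ^ 8" using L by (intro power_increasing) auto
  have L18: "L \<le> L ^ 8 / 2"
  proof -
    have "L * 2 \<le> L * L ^ 7" using L by (intro mult_left_mono) (auto intro: order.trans[OF _ power_increasing[of 1 7 L]])
    thus ?thesis by (simp add: eval_nat_numeral mult_ac)
  qed
  show "exp (- 2 * (sqrt (real Mm) * L ^ 4) ^ 2 / real Mm) \<le> exp (- 4 * L)"
    unfolding sq using Mmr L18 by simp
  show "exp (- 2 * (sqrt (real Mm) * L ^ 4) ^ 2 / (real K * real D ^ 2)) \<le> exp (- 4 * L)"
  proof -
    have pos: "real K * real D ^ 2 > 0" using K0 Dr by simp
    have "4 * L * (real K * real D ^ 2) = 4 * L * real Mm * (dn * real D)" unfolding KD2 by simp
    also have "\<dots> \<le> 4 * L * real Mm * (L ^ 4 / 2)"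
      using dnD L1 L Mmr by (intro mult_left_mono) auto
    also have "\<dots> = 2 * real Mm * L ^ 5" by (simp add: eval_nat_numeral)
    also have "\<dots> \<le> 2 * real Mm * L ^ 8" using L85 Mmr by simp
    finally have "4 * L * (real K * real D ^ 2) \<le> 2 * (real Mm * L ^ 8)" by simp
    hence "4 * L \<le> 2 * (real Mm * L ^ 8) / (real K * real D ^ 2)" using pos by (simp add: field_simps)
    thus ?thesis unfolding sq by simp
  qed
  have r: "real (Mm - D) / real Mm = 1 - x" unfolding x_def using DM Mmr by (simp add: of_nat_diff field_simps)
  have up: "(1 - x) ^ K \<le> exp (- dn)"
  proof -
    have "(1 - x) ^ K \<le> exp (- x) ^ K" using xh x0 by (intro power_mono) (auto simp: exp_ge_add_one_self[of "-x", simplified])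
    also have "exp (- x) ^ K = exp (- dn)" by (simp add: exp_of_nat_mult[symmetric] Kx[symmetric])
    finally show ?thesis .
  qed
  have low: "(1 - x) ^ K \<ge> exp (- dn) * (1 - 2 * real K * x ^ 2)"
  proof -
    have "(1 - x) ^ K = exp (real K * ln (1 - x))" using xh by (simp add: exp_of_nat_mult)
    also have "real K * ln (1 - x) \<ge> real K * (- x - 2 * x ^ 2)"
      using ln_one_minus_pos_lower_bound[of x] x0 xh K0 by (intro mult_left_mono) auto
    hence "exp (real K * ln (1 - x)) \<ge> exp (- dn - 2 * real K * x ^ 2)"
      using Kx by (simp add: algebra_simps)
    also have "exp (- dn - 2 * real K * x ^ 2) = exp (- dn) * exp (- (2 * real K * x ^ 2))"
      by (simp add: exp_diff exp_minus field_simps)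
    finally have A: "exp (- dn) * exp (- (2 * real K * x ^ 2)) \<le> (1 - x) ^ K" .
    have B: "exp (- (2 * real K * x ^ 2)) \<ge> 1 - 2 * real K * x ^ 2"
      using exp_ge_add_one_self[of "- (2 * real K * x ^ 2)"] by simp
    have "exp (- dn) * (1 - 2 * real K * x ^ 2) \<le> exp (- dn) * exp (- (2 * real K * x ^ 2))"
      using B by (intro mult_left_mono) auto
    with A show ?thesis by linarith
  qed
  show "\<bar>real Mm * (real (Mm - D) / real Mm) ^ K - exp (- dn) * real Mm\<bar> \<le> sqrt (real Mm) * L ^ 4"
  proof -
    have "\<bar>real Mm * (1 - x) ^ K - exp (- dn) * real Mm\<bar> = real Mm * (exp (- dn) - (1 - x) ^ K)"
      using up Mmr by (simp add: abs_if algebra_simps mult_left_mono)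
    also have "\<dots> \<le> real Mm * (exp (- dn) * (2 * real K * x ^ 2))"
      using low Mmr by (intro mult_left_mono) (auto simp: algebra_simps)
    also have "\<dots> \<le> real Mm * (2 * real K * x ^ 2)"
      using dn0 Mmr K0 by (intro mult_left_mono mult_left_le_one_le) auto
    also have "real Mm * (2 * real K * x ^ 2) = 2 * (dn * real D)"
    proof -
      have "real Mm * (2 * real K * x ^ 2) = 2 * (real K * x) * (x * real Mm)" by (simp add: power2_eq_square algebra_simps)
      also have "\<dots> = 2 * (dn * real D)" by (simp only: Kx Dx[symmetric])
      finally show ?thesis .
    qed
    also have "\<dots> \<le> L ^ 4" using dnD L1 by simp
    also have "\<dots> \<le> sqrt (real Mm) * L ^ 4"
    proof -
      have "1 \<le> sqrt (real Mm)" using Mm0 by simp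
      hence "1 * L ^ 4 \<le> sqrt (real Mm) * L ^ 4" using L by (intro mult_right_mono) auto
      thus ?thesis by simp
    qed
    finally show ?thesis unfolding r .
  qed
qed


lemma card_split:
  assumes "finite A"
  shows "card {a \<in> A. P a} + card {a \<in> A. \<not> P a} = card A"
proof -
  have "card ({a \<in> A. P a} \<union> {a \<in> A. \<not> P a}) = card {a \<in> A. P a} + card {a \<in> A. \<not> P a}"
    using assms by (intro card_Un_disjoint) auto
  also have "{a \<in> A. P a} \<union> {a \<in> A. \<not> P a} = A" by auto
  finally show ?thesis by simp
qed

lemma cnt_ids:
  "real (negc Mm S G) + real (posc Mm True S G) = real Mm"
  "real (mcount Mm False False (S,G,F)) = real (negc Mm S G) - real (fcnt Mm False S G F)"
  "real (mcount Mm True False (S,G,F)) = real (posc Mm True S G) - real (fcnt Mm True S G F)"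
  "mcount Mm False True (S,G,F) = fcnt Mm False S G F"
  "mcount Mm True True (S,G,F) = fcnt Mm True S G F"
  "posc Mm False S G = negc Mm S G"
proof -
  show "real (negc Mm S G) + real (posc Mm True S G) = real Mm"
    using card_split[of "{..<Mm}" "truepos S G"] unfolding negc_def posc_def by simp
  have "card {a \<in> {a \<in> {..<Mm}. truepos S G a = False}. F a} + card {a \<in> {a \<in> {..<Mm}. truepos S G a = False}. \<not> F a}
        = card {a \<in> {..<Mm}. truepos S G a = False}"
    by (rule card_split) auto
  thus "real (mcount Mm False False (S,G,F)) = real (negc Mm S G) - real (fcnt Mm False S G F)"
    unfolding mcount_def negc_def fcnt_def by (simp add: conj_ac)
  have "card {a \<in> {a \<in> {..<Mm}. truepos S G a = True}. F a} + card {a \<in> {a \<in> {..<Mm}. truepos S G a = True}. \<not> F a}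
        = card {a \<in> {..<Mm}. truepos S G a = True}"
    by (rule card_split) auto
  thus "real (mcount Mm True False (S,G,F)) = real (posc Mm True S G) - real (fcnt Mm True S G F)"
    unfolding mcount_def posc_def fcnt_def by (simp add: conj_ac)
  show "mcount Mm False True (S,G,F) = fcnt Mm False S G F" "mcount Mm True True (S,G,F) = fcnt Mm True S G F"
    unfolding mcount_def fcnt_def by simp_all
  show "posc Mm False S G = negc Mm S G" unfolding posc_def negc_def by simp
qed

theorem corollaryA5:
  fixes \<theta> c d p q :: real
    and k m \<Delta> :: "nat \<Rightarrow> nat"
    and cn dn :: "nat \<Rightarrow> real"
  assumes \<theta>: "0 < \<theta>" "\<theta> < 1"
    and k_asymp: "(\<lambda>n. real (k n) / real n powr \<theta>) \<longlonglongrightarrow> 1"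
    and cd_pos: "0 < c" "0 < d"
    and cn_lim: "cn \<longlonglongrightarrow> c" and dn_lim: "dn \<longlonglongrightarrow> d"
    and m_def: "\<forall>\<^sub>F n in sequentially. real (m n) = cn n * real (k n) * ln (real n / real (k n))"
    and \<Delta>_def: "\<forall>\<^sub>F n in sequentially. real (\<Delta> n) = cn n * dn n * ln (real n / real (k n))"
    and pq: "0 \<le> p" "0 \<le> q" "p + q < 1"
  shows "\<exists>C. (\<lambda>n. measure_pmf.prob (gt_model n (k n) (m n) (\<Delta> n) p q)
             {\<omega>. \<not> (
               \<bar>real (mcount (m n) False True \<omega>) - exp (- dn n) * p * real (m n)\<bar>
                  \<le> C * sqrt (real (m n)) * ln (real n) ^ 4 \<and>
               \<bar>real (mcount (m n) False False \<omega>) - exp (- dn n) * (1 - p) * real (m n)\<bar>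
                  \<le> C * sqrt (real (m n)) * ln (real n) ^ 4 \<and>
               \<bar>real (mcount (m n) True True \<omega>) - (1 - exp (- dn n)) * q * real (m n)\<bar>
                  \<le> C * sqrt (real (m n)) * ln (real n) ^ 4 \<and>
               \<bar>real (mcount (m n) True False \<omega>) - (1 - exp (- dn n)) * (1 - q) * real (m n)\<bar>
                  \<le> C * sqrt (real (m n)) * ln (real n) ^ 4)})
           \<in> o(\<lambda>n. 1 / real n ^ 2)"
proof (rule exI[of _ 3])
  have p1: "p \<le> 1" and q1: "q \<le> 1" using pq by linarith+
  define B :: real where "B = max 2 (16 * c * d ^ 2)"
  have evk: "eventually (\<lambda>n. 1/2 < real (k n) / real n powr \<theta> \<and> real (k n) / real n powr \<theta> < 2) sequentially"
    using k_asymp by (intro eventually_conj order_tendstoD) auto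
  have "filterlim (\<lambda>n. real n powr \<theta>) at_top sequentially" using \<theta> by real_asymp
  hence evpow: "eventually (\<lambda>n. 8 * d \<le> real n powr \<theta>) sequentially"
    by (simp add: filterlim_at_top)
  have evlt: "eventually (\<lambda>n. 2 * real n powr \<theta> < real n) sequentially" using \<theta> by real_asymp
  have "filterlim (\<lambda>n. ln (real n)) at_top sequentially" by real_asymp
  hence evL: "eventually (\<lambda>n. B \<le> ln (real n)) sequentially"
    by (simp add: filterlim_at_top)
  have evc: "eventually (\<lambda>n. c / 2 < cn n \<and> cn n < 2 * c) sequentially"
    using cn_lim cd_pos by (intro eventually_conj order_tendstoD) auto
  have evd: "eventually (\<lambda>n. d / 2 < dn n \<and> dn n < 2 * d) sequentially"
    using dn_lim cd_pos by (intro eventually_conj order_tendstoD) auto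
  have ev: "eventually (\<lambda>n. measure_pmf.prob (gt_model n (k n) (m n) (\<Delta> n) p q)
             {\<omega>. \<not> (
               \<bar>real (mcount (m n) False True \<omega>) - exp (- dn n) * p * real (m n)\<bar>
                  \<le> 3 * sqrt (real (m n)) * ln (real n) ^ 4 \<and>
               \<bar>real (mcount (m n) False False \<omega>) - exp (- dn n) * (1 - p) * real (m n)\<bar>
                  \<le> 3 * sqrt (real (m n)) * ln (real n) ^ 4 \<and>
               \<bar>real (mcount (m n) True True \<omega>) - (1 - exp (- dn n)) * q * real (m n)\<bar>
                  \<le> 3 * sqrt (real (m n)) * ln (real n) ^ 4 \<and>
               \<bar>real (mcount (m n) True False \<omega>) - (1 - exp (- dn n)) * (1 - q) * real (m n)\<bar>
                  \<le> 3 * sqrt (real (m n)) * ln (real n) ^ 4)} \<le> 6 * exp (- 4 * ln (real n))) sequentially"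
    using evk evpow evlt evL evc evd m_def \<Delta>_def
  proof eventually_elim
    case (elim n)
    define K where "K = k n"
    define Mm where "Mm = m n"
    define D where "D = \<Delta> n"
    define L where "L = ln (real n)"
    define l where "l = ln (real n / real K)"
    define tt where "tt = sqrt (real Mm) * L ^ 4"
    have n0: "real n > 0" using elim(3) by (cases "n = 0") auto
    have pw: "real n powr \<theta> > 0" using n0 by simp
    have K1: "real K > real n powr \<theta> / 2" using elim(1) pw unfolding K_def by (simp add: field_simps)
    have K2: "real K < 2 * real n powr \<theta>" using elim(1) pw unfolding K_def by (simp add: field_simps)
    have K4: "real K \<ge> 4 * d" using K1 elim(2) by linarith
    have K0: "0 < K" using K4 cd_pos by (cases K) auto
    have Kn: "real K < real n" using K2 elim(3) by linarith
    hence Kn': "K \<le> n" by simp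
    have l0: "0 < l" unfolding l_def using Kn K0 by (simp add: field_simps)
    have lL: "l \<le> L"
    proof -
      have "l = ln (real n) - ln (real K)" unfolding l_def using n0 K0 by (simp add: ln_div)
      moreover have "ln (real K) \<ge> 0" using K0 by simp
      ultimately show ?thesis unfolding L_def by simp
    qed
    have L2: "L \<ge> 2" using elim(4) unfolding L_def B_def by simp
    have L3: "L ^ 3 \<ge> 16 * c * d ^ 2"
    proof -
      have "L ^ 3 \<ge> L ^ 1" using L2 by (intro power_increasing) auto
      thus ?thesis using elim(4) unfolding L_def B_def by simp
    qed
    have Mmeq: "real Mm = cn n * real K * l" using elim(7) unfolding Mm_def K_def l_def by simp
    have Deq: "real D = cn n * dn n * l" using elim(8) unfolding D_def K_def l_def by simp
    note nb = n_bounds[OF cd_pos(1) conjunct1[OF elim(5)] conjunct2[OF elim(5)]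
                         cd_pos(2) conjunct1[OF elim(6)] conjunct2[OF elim(6)] Mmeq Deq l0 lL K4 L2 L3]
    have tt0: "tt > 0" unfolding tt_def using nb(3) L2 by simp
    define EA where "EA = {(S::nat set, G::nat \<Rightarrow> nat set, F::nat \<Rightarrow> bool). \<bar>real (negc Mm S G) - EM0 Mm D K\<bar> \<ge> tt}"
    define EB where "EB t = {(S::nat set, G::nat \<Rightarrow> nat set, F::nat \<Rightarrow> bool).
       \<bar>real (fcnt Mm t S G F) - (if t then q else p) * real (posc Mm t S G)\<bar> \<ge> tt}" for t
    have PA: "measure_pmf.prob (gt_model n K Mm D p q) EA \<le> 2 * exp (- 4 * L)"
    proof -
      have "measure_pmf.prob (gt_model n K Mm D p q) EA \<le> 2 * exp (- 2 * tt^2 / (real K * real D ^ 2))"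
        unfolding EA_def by (rule probA) (use Kn' K0 nb tt0 in auto)
      also have "\<dots> \<le> 2 * exp (- 4 * L)" using nb(5) unfolding tt_def by simp
      finally show ?thesis .
    qed
    have PB: "measure_pmf.prob (gt_model n K Mm D p q) (EB t) \<le> 2 * exp (- 4 * L)" for t
    proof -
      have "measure_pmf.prob (gt_model n K Mm D p q) (EB t) \<le> 2 * exp (- 2 * tt^2 / real Mm)"
        unfolding EB_def by (rule probB) (use Kn' nb tt0 pq p1 q1 in auto)
      also have "\<dots> \<le> 2 * exp (- 4 * L)" using nb(6) unfolding tt_def by simp
      finally show ?thesis .
    qed
    have sub: "{\<omega>. \<not> (
               \<bar>real (mcount Mm False True \<omega>) - exp (- dn n) * p * real Mm\<bar> \<le> 3 * sqrt (real Mm) * L ^ 4 \<and>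
               \<bar>real (mcount Mm False False \<omega>) - exp (- dn n) * (1 - p) * real Mm\<bar> \<le> 3 * sqrt (real Mm) * L ^ 4 \<and>
               \<bar>real (mcount Mm True True \<omega>) - (1 - exp (- dn n)) * q * real Mm\<bar> \<le> 3 * sqrt (real Mm) * L ^ 4 \<and>
               \<bar>real (mcount Mm True False \<omega>) - (1 - exp (- dn n)) * (1 - q) * real Mm\<bar> \<le> 3 * sqrt (real Mm) * L ^ 4)}
          \<subseteq> EA \<union> EB False \<union> EB True"
    proof
      fix \<omega> assume \<omega>: "\<omega> \<in> {\<omega>. \<not> (
               \<bar>real (mcount Mm False True \<omega>) - exp (- dn n) * p * real Mm\<bar> \<le> 3 * sqrt (real Mm) * L ^ 4 \<and>
               \<bar>real (mcount Mm False False \<omega>) - exp (- dn n) * (1 - p) * real Mm\<bar> \<le> 3 * sqrt (real Mm) * L ^ 4 \<and>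
               \<bar>real (mcount Mm True True \<omega>) - (1 - exp (- dn n)) * q * real Mm\<bar> \<le> 3 * sqrt (real Mm) * L ^ 4 \<and>
               \<bar>real (mcount Mm True False \<omega>) - (1 - exp (- dn n)) * (1 - q) * real Mm\<bar> \<le> 3 * sqrt (real Mm) * L ^ 4)}"
      obtain S G F where \<omega>eq: "\<omega> = (S, G, F)" by (cases \<omega>) auto
      show "\<omega> \<in> EA \<union> EB False \<union> EB True"
      proof (rule ccontr)
        assume "\<omega> \<notin> EA \<union> EB False \<union> EB True"
        hence h1: "\<bar>real (negc Mm S G) - EM0 Mm D K\<bar> < tt"
          and h3: "\<bar>real (fcnt Mm False S G F) - p * real (negc Mm S G)\<bar> < tt"
          and h4: "\<bar>real (fcnt Mm True S G F) - q * real (posc Mm True S G)\<bar> < tt"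
          unfolding EA_def EB_def \<omega>eq by (auto simp: cnt_ids(6))
        have h2: "\<bar>EM0 Mm D K - exp (- dn n) * real Mm\<bar> \<le> tt"
          using nb(4) unfolding EM0_def tt_def .
        have "\<bar>real (fcnt Mm False S G F) - exp (- dn n) * p * real Mm\<bar> \<le> 3 * tt \<and>
              \<bar>real (mcount Mm False False (S,G,F)) - exp (- dn n) * (1 - p) * real Mm\<bar> \<le> 3 * tt \<and>
              \<bar>real (fcnt Mm True S G F) - (1 - exp (- dn n)) * q * real Mm\<bar> \<le> 3 * tt \<and>
              \<bar>real (mcount Mm True False (S,G,F)) - (1 - exp (- dn n)) * (1 - q) * real Mm\<bar> \<le> 3 * tt"
          by (rule det_combine[OF pq(1) p1 pq(2) q1 h1 h2 h3 h4 cnt_ids(1) cnt_ids(2) cnt_ids(3)])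
        with \<omega> show False unfolding \<omega>eq tt_def by (simp add: cnt_ids(4,5) mult.assoc)
      qed
    qed
    have "measure_pmf.prob (gt_model n K Mm D p q) {\<omega>. \<not> (
               \<bar>real (mcount Mm False True \<omega>) - exp (- dn n) * p * real Mm\<bar> \<le> 3 * sqrt (real Mm) * L ^ 4 \<and>
               \<bar>real (mcount Mm False False \<omega>) - exp (- dn n) * (1 - p) * real Mm\<bar> \<le> 3 * sqrt (real Mm) * L ^ 4 \<and>
               \<bar>real (mcount Mm True True \<omega>) - (1 - exp (- dn n)) * q * real Mm\<bar> \<le> 3 * sqrt (real Mm) * L ^ 4 \<and>
               \<bar>real (mcount Mm True False \<omega>) - (1 - exp (- dn n)) * (1 - q) * real Mm\<bar> \<le> 3 * sqrt (real Mm) * L ^ 4)}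
          \<le> measure_pmf.prob (gt_model n K Mm D p q) (EA \<union> EB False \<union> EB True)"
      by (intro measure_pmf.finite_measure_mono sub) auto
    also have "\<dots> \<le> measure_pmf.prob (gt_model n K Mm D p q) (EA \<union> EB False) + measure_pmf.prob (gt_model n K Mm D p q) (EB True)"
      by (rule measure_Un_le) auto
    also have "\<dots> \<le> measure_pmf.prob (gt_model n K Mm D p q) EA + measure_pmf.prob (gt_model n K Mm D p q) (EB False) + measure_pmf.prob (gt_model n K Mm D p q) (EB True)"
      using measure_Un_le[of EA "measure_pmf (gt_model n K Mm D p q)" "EB False"] by simp
    also have "\<dots> \<le> 6 * exp (- 4 * L)" using PA PB[of False] PB[of True] by simp
    finally show ?case unfolding K_def Mm_def D_def L_def .
  qed
  have "(\<lambda>n. measure_pmf.prob (gt_model n (k n) (m n) (\<Delta> n) p q)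
             {\<omega>. \<not> (
               \<bar>real (mcount (m n) False True \<omega>) - exp (- dn n) * p * real (m n)\<bar>
                  \<le> 3 * sqrt (real (m n)) * ln (real n) ^ 4 \<and>
               \<bar>real (mcount (m n) False False \<omega>) - exp (- dn n) * (1 - p) * real (m n)\<bar>
                  \<le> 3 * sqrt (real (m n)) * ln (real n) ^ 4 \<and>
               \<bar>real (mcount (m n) True True \<omega>) - (1 - exp (- dn n)) * q * real (m n)\<bar>
                  \<le> 3 * sqrt (real (m n)) * ln (real n) ^ 4 \<and>
               \<bar>real (mcount (m n) True False \<omega>) - (1 - exp (- dn n)) * (1 - q) * real (m n)\<bar>
                  \<le> 3 * sqrt (real (m n)) * ln (real n) ^ 4)}) \<in> O(\<lambda>n. exp (- 4 * ln (real n)))"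
    by (rule bigoI[where c = 6]) (use ev in \<open>auto elim!: eventually_mono\<close>)
  moreover have "(\<lambda>n. exp (- 4 * ln (real n))) \<in> o(\<lambda>n. 1 / real n ^ 2)" by real_asymp
  ultimately show "(\<lambda>n. measure_pmf.prob (gt_model n (k n) (m n) (\<Delta> n) p q)
             {\<omega>. \<not> (
               \<bar>real (mcount (m n) False True \<omega>) - exp (- dn n) * p * real (m n)\<bar>
                  \<le> 3 * sqrt (real (m n)) * ln (real n) ^ 4 \<and>
               \<bar>real (mcount (m n) False False \<omega>) - exp (- dn n) * (1 - p) * real (m n)\<bar>
                  \<le> 3 * sqrt (real (m n)) * ln (real n) ^ 4 \<and>
               \<bar>real (mcount (m n) True True \<omega>) - (1 - exp (- dn n)) * q * real (m n)\<bar>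
                  \<le> 3 * sqrt (real (m n)) * ln (real n) ^ 4 \<and>
               \<bar>real (mcount (m n) True False \<omega>) - (1 - exp (- dn n)) * (1 - q) * real (m n)\<bar>
                  \<le> 3 * sqrt (real (m n)) * ln (real n) ^ 4)}) \<in> o(\<lambda>n. 1 / real n ^ 2)"
    by (rule landau_o.big_small_trans)
qed

end
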